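(* Suppose the model has a single-strain ($I_1$)-infection equilibrium $E_1=(\bar S,\bar V_1,\bar I_1,0)$ and a single-strain ($I_2$)-infection equilibrium $E_2=(\tilde S,\tilde V_1,0,\tilde I_2)$, each with positive listed components. Define $\bar{\mathcal{R}}_2=\frac{1}{\alpha_2}\frac{\partial F_2}{\partial I_2}(\bar S,0)+\frac{k\bar V_1}{\alpha_2}$ and $\tilde{\mathcal{R}}_1=\frac{1}{\alpha_1}\frac{\partial F_1}{\partial I_1}(\tilde S,0)$. If $\bar{\mathcal{R}}_2>1$ and $\tilde{\mathcal{R}}_1>1$, then the model admits an endemic equilibrium $E_3=(S^*,V_1^*,I_1^*,I_2^* )$ with all components positive.
   Context: The model is $\dot S=\Lambda-F_1(S,I_1)-F_2(S,I_2)-\lambda S$, $\dot V_1=rS-(\mu+kI_2)V_1$, $\dot I_1=F_1(S,I_1)-\alpha_1I_1$, $\dot I_2=F_2(S,I_2)+kI_2V_1-\alpha_2I_2$ on $\mathbb{R}^4_+$. The constants $\Lambda,\mu,r,k,\gamma_1,\gamma_2>0$ and $v_1,v_2\ge0$; $\lambda=r+\mu$ and $\alpha_i=\gamma_i+v_i+\mu$. For $i=1,2$ the incidence functions satisfy: - (H1) $F_i(S,I_i)=I_if_i(S,I_i)$ with $F_i,f_i\in C^2(\mathbb{R}^2_+,\mathbb{R}_+)$ and $F_i(0,I_i)=F_i(S,0)=0$; - (H2) $\partial f_i/\partial S>0$ and $\partial f_i/\partial I_i\le0$; - (H3) $\lim_{I_i\to0^+}F_i(S,I_i)/I_i$ exists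 and is positive for $S>0$. *)

theory Defs
  imports "HOL-Analysis.Analysis"
begin

definition quadrant :: "(real \<times> real) set" where
  "quadrant = {p. fst p \<ge> 0 \<and> snd p \<ge> 0}"

definition C2_on :: "(real \<times> real \<Rightarrow> real) \<Rightarrow> (real \<times> real) set \<Rightarrow> bool" where
  "C2_on g Q \<longleftrightarrow>
     (\<exists>(Dg :: real \<times> real \<Rightarrow> ((real \<times> real) \<Rightarrow>\<^sub>L real))
        (D2g :: real \<times> real \<Rightarrow> ((real \<times> real) \<Rightarrow>\<^sub>L ((real \<times> real) \<Rightarrow>\<^sub>L real))).
        (\<forall>x\<in>Q. (g has_derivative blinfun_apply (Dg x)) (at x within Q)) \<and>
        (\<forall>x\<in>Q. (Dg has_derivative blinfun_apply (D2g x)) (at x within Q)) \<and>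
        continuous_on Q D2g)"

definition incidence_ok :: "(real \<Rightarrow> real \<Rightarrow> real) \<Rightarrow> (real \<Rightarrow> real \<Rightarrow> real) \<Rightarrow> bool" where
  "incidence_ok F f \<longleftrightarrow>
     \<comment> \<open>(H1)\<close>
     (\<forall>S\<ge>0. \<forall>I\<ge>0. F S I = I * f S I \<and> F S I \<ge> 0 \<and> f S I \<ge> 0) \<and>
     C2_on (\<lambda>p. F (fst p) (snd p)) quadrant \<and>
     C2_on (\<lambda>p. f (fst p) (snd p)) quadrant \<and>
     (\<forall>I\<ge>0. F 0 I = 0) \<and> (\<forall>S\<ge>0. F S 0 = 0) \<and>
     \<comment> \<open>(H2)\<close>
     (\<forall>S\<ge>0. \<forall>I\<ge>0. \<exists>d. ((\<lambda>s. f s I) has_real_derivative d) (at S within {0..}) \<and> d > 0) \<and>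
     (\<forall>S\<ge>0. \<forall>I\<ge>0. \<exists>d. ((\<lambda>i. f S i) has_real_derivative d) (at I within {0..}) \<and> d \<le> 0) \<and>
     \<comment> \<open>(H3)\<close>
     (\<forall>S>0. \<exists>L>0. ((\<lambda>I. F S I / I) \<longlongrightarrow> L) (at_right 0))"

text \<open>Partial derivative dF/dI at (S,0), taken from the right (domain is R^2_+).
  Since F(S,0) = 0 this is the limit of F(S,I)/I as I tends to 0+.\<close>
definition dF_dI0 :: "(real \<Rightarrow> real \<Rightarrow> real) \<Rightarrow> real \<Rightarrow> real" where
  "dF_dI0 F S = Lim (at_right 0) (\<lambda>I. (F S I - F S 0) / I)"

definition is_equilibrium ::
  "real \<Rightarrow> real \<Rightarrow> real \<Rightarrow> real \<Rightarrow> real \<Rightarrow> real \<Rightarrow>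
   (real \<Rightarrow> real \<Rightarrow> real) \<Rightarrow> (real \<Rightarrow> real \<Rightarrow> real) \<Rightarrow>
   real \<Rightarrow> real \<Rightarrow> real \<Rightarrow> real \<Rightarrow> bool" where
  "is_equilibrium \<Lambda> \<mu> r k \<alpha>1 \<alpha>2 F1 F2 S V1 I1 I2 \<longleftrightarrow>
     \<Lambda> - F1 S I1 - F2 S I2 - (r + \<mu>) * S = 0 \<and>
     r * S - (\<mu> + k * I2) * V1 = 0 \<and>
     F1 S I1 - \<alpha>1 * I1 = 0 \<and>
     F2 S I2 + k * I2 * V1 - \<alpha>2 * I2 = 0"

end

theory Submission
  imports Defs
begin

lemma inc_H1:
  assumes "incidence_ok F f" "S \<ge> 0" "I \<ge> 0"
  shows "F S I = I * f S I \<and> F S I \<ge> 0 \<and> f S I \<ge> 0"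
proof -
  have H: "\<forall>S\<ge>0. \<forall>I\<ge>0. F S I = I * f S I \<and> F S I \<ge> 0 \<and> f S I \<ge> 0"
    using assms(1) unfolding incidence_ok_def by (elim conjE)
  then show ?thesis using assms(2,3) by blast
qed

lemma inc_FS0:
  assumes "incidence_ok F f" "S \<ge> 0"
  shows "F S 0 = 0"
proof -
  have H: "\<forall>S\<ge>0. F S 0 = 0"
    using assms(1) unfolding incidence_ok_def by (elim conjE)
  then show ?thesis using assms(2) by blast
qed



lemma inc_cont_S:
  assumes "incidence_ok F f" "I \<ge> 0"
  shows "continuous_on {0..} (\<lambda>s. f s I)"
proof -
  have H: "\<forall>S\<ge>0. \<forall>I\<ge>0. \<exists>d. ((\<lambda>s. f s I) has_real_derivative d) (at S within {0..}) \<and> d > 0"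
    using assms(1) unfolding incidence_ok_def by (elim conjE)
  have *: "\<exists>d. ((\<lambda>s. f s I) has_real_derivative d) (at x within {0..})" if "x \<in> {0..}" for x
  proof -
    have "x \<ge> 0" using that by simp
    then show ?thesis using H assms(2) by blast
  qed
  show ?thesis unfolding continuous_on_eq_continuous_within
  proof
    fix x :: real assume "x \<in> {0..}"
    then obtain d where "((\<lambda>s. f s I) has_real_derivative d) (at x within {0..})" using * by blast
    then show "continuous (at x within {0..}) (\<lambda>s. f s I)" by (rule DERIV_continuous)
  qed
qed

lemma inc_cont_I:
  assumes "incidence_ok F f" "S \<ge> 0"
  shows "continuous_on {0..} (\<lambda>i. f S i)"
proof -
  have H: "\<forall>S\<ge>0. \<forall>I\<ge>0. \<exists>d. ((\<lambda>i. f S i) has_real_derivative d) (at I within {0..}) \<and> d \<le> 0"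
    using assms(1) unfolding incidence_ok_def by (elim conjE)
  have *: "\<exists>d. ((\<lambda>i. f S i) has_real_derivative d) (at x within {0..})" if "x \<in> {0..}" for x
  proof -
    have "x \<ge> 0" using that by simp
    then show ?thesis using H assms(2) by blast
  qed
  show ?thesis unfolding continuous_on_eq_continuous_within
  proof
    fix x :: real assume "x \<in> {0..}"
    then obtain d where "((\<lambda>i. f S i) has_real_derivative d) (at x within {0..})" using * by blast
    then show "continuous (at x within {0..}) (\<lambda>i. f S i)" by (rule DERIV_continuous)
  qed
qed

lemma inc_mono_S:
  assumes "incidence_ok F f" "0 \<le> a" "a < b" "0 \<le> I"
  shows "f a I < f b I"
proof (rule DERIV_pos_imp_increasing_open[OF assms(3)])
  fix x assume x: "a < x" "x < b"
  obtain d where d: "((\<lambda>s. f s I) has_real_derivative d) (at x within {0..})" "d > 0"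
  proof -
    have H: "\<forall>S\<ge>0. \<forall>I\<ge>0. \<exists>d. ((\<lambda>s. f s I) has_real_derivative d) (at S within {0..}) \<and> d > 0"
      using assms(1) unfolding incidence_ok_def by (elim conjE)
    have "x \<ge> 0" using assms(2) x by simp
    then show ?thesis using H assms(4) that by blast
  qed
  have "((\<lambda>s. f s I) has_real_derivative d) (at x within {0<..})"
    by (rule DERIV_subset[OF d(1)]) auto
  then have "((\<lambda>s. f s I) has_real_derivative d) (at x)"
    using at_within_open[of x "{0<..}"] x assms(2) by auto
  then show "\<exists>y. ((\<lambda>s. f s I) has_real_derivative y) (at x) \<and> 0 < y" using d by blast
next
  show "continuous_on {a..b} (\<lambda>s. f s I)"
    using continuous_on_subset[OF inc_cont_S[OF assms(1,4)]] assms(2) by auto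
qed

lemma inc_anti_I:
  assumes "incidence_ok F f" "0 \<le> a" "a \<le> b" "0 \<le> S"
  shows "f S b \<le> f S a"
proof (rule DERIV_nonpos_imp_decreasing_open[OF assms(3)])
  fix x assume x: "a < x" "x < b"
  obtain d where d: "((\<lambda>i. f S i) has_real_derivative d) (at x within {0..})" "d \<le> 0"
  proof -
    have H: "\<forall>S\<ge>0. \<forall>I\<ge>0. \<exists>d. ((\<lambda>i. f S i) has_real_derivative d) (at I within {0..}) \<and> d \<le> 0"
      using assms(1) unfolding incidence_ok_def by (elim conjE)
    have "x \<ge> 0" using assms(2) x by simp
    then show ?thesis using H assms(4) that by blast
  qed
  have "((\<lambda>i. f S i) has_real_derivative d) (at x within {0<..})"
    by (rule DERIV_subset[OF d(1)]) auto
  then have "((\<lambda>i. f S i) has_real_derivative d) (at x)"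
    using at_within_open[of x "{0<..}"] x assms(2) by auto
  then show "\<exists>y. ((\<lambda>i. f S i) has_real_derivative y) (at x) \<and> y \<le> 0" using d by blast
next
  show "continuous_on {a..b} (\<lambda>i. f S i)"
    using continuous_on_subset[OF inc_cont_I[OF assms(1,4)]] assms(2) by auto
qed

lemma inc_tendsto0:
  assumes "incidence_ok F f" "S \<ge> 0"
  shows "((\<lambda>i. f S i) \<longlongrightarrow> f S 0) (at_right 0)"
proof -
  have "continuous (at 0 within {0..}) (\<lambda>i. f S i)"
    using inc_cont_I[OF assms] by (simp add: continuous_on_eq_continuous_within)
  then have "((\<lambda>i. f S i) \<longlongrightarrow> f S 0) (at 0 within {0..})"
    by (simp add: continuous_within)
  then show ?thesis by (rule tendsto_within_subset) auto
qed

lemma inc_f0: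
  assumes "incidence_ok F f" "I \<ge> 0"
  shows "f 0 I = 0"
proof -
  have pos: "f 0 i = 0" if "i > 0" for i
  proof -
    have H1: "\<forall>S\<ge>0. \<forall>I\<ge>0. F S I = I * f S I \<and> F S I \<ge> 0 \<and> f S I \<ge> 0"
      using assms(1) unfolding incidence_ok_def by (elim conjE)
    have H2: "\<forall>I\<ge>0. F 0 I = 0"
      using assms(1) unfolding incidence_ok_def by (elim conjE)
    note H = H1 H2
    have "F 0 i = i * f 0 i" using H1[rule_format, of 0 i] that by simp
    moreover have "F 0 i = 0" using H2[rule_format, of i] that by simp
    ultimately have "i * f 0 i = 0" by simp
    then show ?thesis using that by simp
  qed
  show ?thesis
  proof (cases "I > 0")
    case True then show ?thesis using pos by auto
  next
    case False
    then have I0: "I = 0" using assms by auto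
    have "((\<lambda>i. f 0 i) \<longlongrightarrow> f 0 0) (at_right 0)" using inc_tendsto0[OF assms(1)] by auto
    moreover have "((\<lambda>i. f 0 i) \<longlongrightarrow> 0) (at_right 0)"
      by (rule Lim_transform_eventually[of "\<lambda>_. 0"]) (auto simp: eventually_at_right_less pos eventually_at_right_field intro!: exI[of _ 1])
    ultimately have "f 0 0 = 0" by (intro tendsto_unique[of "at_right (0::real)"]) simp_all
    then show ?thesis using I0 by simp
  qed
qed

lemma inc_dF:
  assumes "incidence_ok F f" "S \<ge> 0"
  shows "dF_dI0 F S = f S 0"
proof -
  have "((\<lambda>I. (F S I - F S 0) / I) \<longlongrightarrow> f S 0) (at_right 0)"
  proof (rule Lim_transform_eventually[OF inc_tendsto0[OF assms]])
    show "\<forall>\<^sub>F x in at_right 0. f S x = (F S x - F S 0) / x"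
    proof -
      have *: "f S y = (F S y - F S 0) / y" if "y > 0" for y
      proof -
        have "F S y = y * f S y" using inc_H1[OF assms(1,2), of y] that by simp
        then show ?thesis using inc_FS0[OF assms] that by simp
      qed
      show ?thesis unfolding eventually_at_right_field
        by (rule exI[of _ 1]) (simp add: *)
    qed
  qed
  then show ?thesis unfolding dF_dI0_def by (rule tendsto_Lim[rotated]) simp
qed

lemma inc_joint:
  assumes "incidence_ok F f"
  shows "continuous_on quadrant (\<lambda>p. f (fst p) (snd p))"
proof -
  have "C2_on (\<lambda>p. f (fst p) (snd p)) quadrant" using assms unfolding incidence_ok_def by (elim conjE)
  then show ?thesis unfolding C2_on_def
    by (elim exE conjE) (rule has_derivative_continuous_on, blast)
qed

theorem mainTheorem10:
  fixes \<Lambda> \<mu> r k \<gamma>1 \<gamma>2 v1 v2 :: real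
    and F1 F2 f1 f2 :: "real \<Rightarrow> real \<Rightarrow> real"
    and Sb Vb Ib St Vt It :: real
  assumes params: "\<Lambda> > 0" "\<mu> > 0" "r > 0" "k > 0" "\<gamma>1 > 0" "\<gamma>2 > 0" "v1 \<ge> 0" "v2 \<ge> 0"
    and H1: "incidence_ok F1 f1" and H2: "incidence_ok F2 f2"
    and E1: "Sb > 0" "Vb > 0" "Ib > 0"
      "is_equilibrium \<Lambda> \<mu> r k (\<gamma>1 + v1 + \<mu>) (\<gamma>2 + v2 + \<mu>) F1 F2 Sb Vb Ib 0"
    and E2: "St > 0" "Vt > 0" "It > 0"
      "is_equilibrium \<Lambda> \<mu> r k (\<gamma>1 + v1 + \<mu>) (\<gamma>2 + v2 + \<mu>) F1 F2 St Vt 0 It"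
    and R2: "dF_dI0 F2 Sb / (\<gamma>2 + v2 + \<mu>) + k * Vb / (\<gamma>2 + v2 + \<mu>) > 1"
    and R1: "dF_dI0 F1 St / (\<gamma>1 + v1 + \<mu>) > 1"
  shows "\<exists>S V1 I1 I2. S > 0 \<and> V1 > 0 \<and> I1 > 0 \<and> I2 > 0 \<and>
           is_equilibrium \<Lambda> \<mu> r k (\<gamma>1 + v1 + \<mu>) (\<gamma>2 + v2 + \<mu>) F1 F2 S V1 I1 I2"
proof -
  define a1 where "a1 = \<gamma>1 + v1 + \<mu>"
  define a2 where "a2 = \<gamma>2 + v2 + \<mu>"
  have a1p: "a1 > 0" and a2p: "a2 > 0" using params by (auto simp: a1_def a2_def)
  have F1f: "\<And>S I. S \<ge> 0 \<Longrightarrow> I \<ge> 0 \<Longrightarrow> F1 S I = I * f1 S I \<and> F1 S I \<ge> 0 \<and> f1 S I \<ge> 0"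
    by (rule inc_H1[OF H1])
  have F2f: "\<And>S I. S \<ge> 0 \<Longrightarrow> I \<ge> 0 \<Longrightarrow> F2 S I = I * f2 S I \<and> F2 S I \<ge> 0 \<and> f2 S I \<ge> 0"
    by (rule inc_H1[OF H2])
  have e1: "\<Lambda> - F1 Sb Ib - F2 Sb 0 - (r + \<mu>) * Sb = 0" "r * Sb - \<mu> * Vb = 0"
     "F1 Sb Ib - a1 * Ib = 0"
    using E1(4) unfolding is_equilibrium_def a1_def by auto
  have e2: "\<Lambda> - F1 St 0 - F2 St It - (r + \<mu>) * St = 0" "r * St - (\<mu> + k * It) * Vt = 0"
     "F2 St It + k * It * Vt - a2 * It = 0"
    using E2(4) unfolding is_equilibrium_def a2_def by auto
  have den: "\<mu> + k * I > 0" if "I \<ge> 0" for I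
    using params that by (smt (verit) mult_nonneg_nonneg)
  define h where "h S I = f2 S I + k * r * S / (\<mu> + k * I)" for S I
  have h_mono: "h a I < h b I" if "0 \<le> a" "a < b" "0 \<le> I" for a b I
  proof -
    have "f2 a I < f2 b I" using inc_mono_S[OF H2 that] .
    moreover have "k * r * a / (\<mu> + k * I) \<le> k * r * b / (\<mu> + k * I)"
    proof (rule divide_right_mono)
      show "k * r * a \<le> k * r * b" using that params by simp
      show "0 \<le> \<mu> + k * I" using den[of I] that by simp
    qed
    ultimately show ?thesis unfolding h_def by linarith
  qed
  have h_mono': "h a I \<le> h b I" if "0 \<le> a" "a \<le> b" "0 \<le> I" for a b I
    using h_mono[of a b I] that by (cases "a = b") auto
  have h_anti: "h S I' < h S I" if "0 < S" "0 \<le> I" "I < I'" for S I I'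
  proof -
    have "f2 S I' \<le> f2 S I" using inc_anti_I[OF H2, of I I' S] that by auto
    moreover have "k * r * S / (\<mu> + k * I') < k * r * S / (\<mu> + k * I)"
    proof (rule divide_strict_left_mono)
      show "\<mu> + k * I < \<mu> + k * I'" using that params by simp
      show "0 < k * r * S" using that params by simp
      show "0 < (\<mu> + k * I') * (\<mu> + k * I)" using den[of I] den[of I'] that by simp
    qed
    ultimately show ?thesis unfolding h_def by linarith
  qed
  have h_ex: "\<exists>S>0. h S I = a2" if I: "I \<ge> 0" for I
  proof -
    define M where "M = a2 * (\<mu> + k * I) / (k * r) + 1"
    have "a2 * (\<mu> + k * I) / (k * r) \<ge> 0"
      using a2p den[OF I] params by (intro divide_nonneg_pos mult_nonneg_nonneg) auto
    then have Mp: "M > 0" unfolding M_def by linarith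
    have "h 0 I = 0" unfolding h_def using inc_f0[OF H2 I] by simp
    moreover have "a2 \<le> h M I"
    proof -
      have krM: "k * r * M = a2 * (\<mu> + k * I) + k * r"
        using params unfolding M_def by (simp add: field_simps)
      have "k * r * M / (\<mu> + k * I) = a2 + k * r / (\<mu> + k * I)"
        unfolding krM using den[OF I] by (simp add: add_divide_distrib)
      moreover have "k * r / (\<mu> + k * I) \<ge> 0" using params I by auto
      moreover have "f2 M I \<ge> 0" using F2f[of M I] Mp I by auto
      ultimately show ?thesis unfolding h_def by linarith
    qed
    moreover have "continuous_on {0..M} (\<lambda>S. h S I)"
      unfolding h_def
    proof (intro continuous_intros)
      show "continuous_on {0..M} (\<lambda>S. f2 S I)"
        using continuous_on_subset[OF inc_cont_S[OF H2 I]] by auto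
    qed (use den[OF I] in auto)
    ultimately obtain S where "0 \<le> S" "S \<le> M" "h S I = a2"
      using IVT'[of "\<lambda>S. h S I" 0 a2 M] a2p Mp by auto
    moreover have "S \<noteq> 0" using \<open>h 0 I = 0\<close> \<open>h S I = a2\<close> a2p by auto
    ultimately have "S > 0" "h S I = a2" by auto
    then show ?thesis by blast
  qed
  have h_uniq: "S = S'" if "0 \<le> S" "0 \<le> S'" "0 \<le> I" "h S I = h S' I" for S S' I
    using h_mono[of S S' I] h_mono[of S' S I] that by (cases S S' rule: linorder_cases) auto
  define \<sigma> where "\<sigma> I = (SOME S. S > 0 \<and> h S I = a2)" for I
  have sig: "\<sigma> I > 0 \<and> h (\<sigma> I) I = a2" if "I \<ge> 0" for I
    unfolding \<sigma>_def using someI_ex[OF h_ex[OF that]] .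
  have sig_mono: "\<sigma> I < \<sigma> I'" if "0 \<le> I" "I < I'" for I I'
  proof (rule ccontr)
    assume a: "\<not> \<sigma> I < \<sigma> I'"
    have I': "I' \<ge> 0" using that by simp
    have "h (\<sigma> I') I' \<le> h (\<sigma> I) I'"
      using h_mono'[of "\<sigma> I'" "\<sigma> I" I'] sig[OF I'] I' a by auto
    moreover have "h (\<sigma> I) I' < h (\<sigma> I) I" using h_anti[of "\<sigma> I" I I'] sig[OF that(1)] that by auto
    ultimately show False using sig[OF that(1)] sig[OF I'] by linarith
  qed
  have ev_self: "\<forall>\<^sub>F I in at I0 within {0..}. I \<in> {0::real..}" for I0 :: real
    by (simp add: eventually_at_filter)
  have sig_cont: "continuous_on {0..} \<sigma>"
    unfolding continuous_on_def
  proof (intro ballI)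
    fix I0 :: real assume "I0 \<in> {0..}"
    then have I0: "I0 \<ge> 0" by simp
    show "(\<sigma> \<longlongrightarrow> \<sigma> I0) (at I0 within {0..})"
    proof (rule tendstoI)
      fix e :: real assume e: "e > 0"
      define e' where "e' = min e (\<sigma> I0 / 2)"
      have s0: "\<sigma> I0 > 0" "h (\<sigma> I0) I0 = a2" using sig[OF I0] by auto
      have e'p: "e' > 0" "e' \<le> e" "e' < \<sigma> I0" using e s0 by (auto simp: e'_def)
      define lo where "lo = \<sigma> I0 - e'"
      define hi where "hi = \<sigma> I0 + e'"
      have lo: "lo > 0" "lo < \<sigma> I0" and hi: "hi > \<sigma> I0" using e'p by (auto simp: lo_def hi_def)
      have hi0: "hi \<ge> 0" using hi s0 by simp
      have lo0: "lo \<ge> 0" using lo by simp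
      have hlo: "h lo I0 < a2" using h_mono[of lo "\<sigma> I0" I0] lo I0 s0 by auto
      have hhi: "h hi I0 > a2" using h_mono[of "\<sigma> I0" hi I0] hi I0 s0 by auto
      have hc: "((\<lambda>I. h S I) \<longlongrightarrow> h S I0) (at I0 within {0..})" if "S \<ge> 0" for S
      proof -
        have "continuous_on {0..} (\<lambda>I. h S I)" unfolding h_def
          by (intro continuous_intros inc_cont_I[OF H2 that]) (use den in force)
        then show ?thesis using I0 by (simp add: continuous_on_def)
      qed
      have ev1: "\<forall>\<^sub>F I in at I0 within {0..}. h lo I < a2"
        using order_tendstoD(2)[OF hc[OF lo0] hlo] .
      have ev2: "\<forall>\<^sub>F I in at I0 within {0..}. h hi I > a2"
        using order_tendstoD(1)[OF hc[OF hi0] hhi] .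
      show "\<forall>\<^sub>F I in at I0 within {0..}. dist (\<sigma> I) (\<sigma> I0) < e"
        using ev1 ev2 ev_self[of I0]
      proof eventually_elim
        case (elim I)
        have sI: "\<sigma> I > 0" "h (\<sigma> I) I = a2" using sig[of I] elim by auto
        have "\<sigma> I > lo"
        proof (rule ccontr)
          assume "\<not> \<sigma> I > lo"
          then have "h (\<sigma> I) I \<le> h lo I" using h_mono'[of "\<sigma> I" lo I] sI elim by auto
          then show False using sI elim by linarith
        qed
        moreover have "\<sigma> I < hi"
        proof (rule ccontr)
          assume "\<not> \<sigma> I < hi"
          then have "h hi I \<le> h (\<sigma> I) I" using h_mono'[of hi "\<sigma> I" I] hi0 elim by auto
          then show False using sI elim by linarith
        qed
        ultimately show ?case using e'p by (auto simp: dist_real_def lo_def hi_def)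
      qed
    qed
  qed
  define T where "T I = \<mu> * \<sigma> I + \<mu> * r * \<sigma> I / (\<mu> + k * I) + a2 * I" for I
  have T_mono: "T I < T I'" if "0 \<le> I" "I < I'" for I I'
  proof -
    define s where "s = \<sigma> I"
    define s' where "s' = \<sigma> I'"
    define D where "D = \<mu> + k * I"
    define D' where "D' = \<mu> + k * I'"
    have I': "I' \<ge> 0" using that by simp
    have ss: "s < s'" "s > 0" using sig_mono[OF that] sig[OF that(1)] by (auto simp: s_def s'_def)
    have DD: "D > 0" "D' > 0" using den[OF that(1)] den[OF I'] by (auto simp: D_def D'_def)
    have hs': "f2 s' I' + k * r * s' / D' = a2" using sig[OF I'] by (simp add: h_def s'_def D'_def)
    have "f2 s' I' \<ge> 0" using F2f[of s' I'] ss I' by auto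
    hence A: "a2 \<ge> k * r * s' / D'" using hs' by linarith
    have B: "a2 * (I' - I) \<ge> k * r * s' / D' * (I' - I)" using A that by (intro mult_right_mono) auto
    have C: "(\<mu> + k * (I' - I)) * D \<ge> \<mu> * D'"
    proof -
      have "(\<mu> + k * (I' - I)) * D - \<mu> * D' = k * k * I * (I' - I)"
        by (simp add: D_def D'_def algebra_simps)
      moreover have "k * k * I * (I' - I) \<ge> 0" using that params by simp
      ultimately show ?thesis by linarith
    qed
    have rs': "r * s' \<ge> 0" using ss params by simp
    have C2: "r * s' * ((\<mu> + k * (I' - I)) * D) \<ge> r * s' * (\<mu> * D')"
      using mult_left_mono[OF C rs'] .
    have E1': "r * s' * (\<mu> + k * (I' - I)) / D' \<ge> \<mu> * r * s' / D"
      using C2 DD by (simp add: field_simps)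
    have E: "\<mu> * r * s' / D' + k * r * s' / D' * (I' - I) \<ge> \<mu> * r * s' / D"
    proof -
      have "\<mu> * r * s' / D' + k * r * s' / D' * (I' - I) = r * s' * (\<mu> + k * (I' - I)) / D'"
        using DD by (simp add: field_simps)
      then show ?thesis using E1' by linarith
    qed
    have G: "\<mu> * r * s' / D \<ge> \<mu> * r * s / D"
      using ss DD params by (intro divide_right_mono mult_left_mono) auto
    have TI: "T I = \<mu> * s + \<mu> * r * s / D + a2 * I" by (simp add: T_def s_def D_def)
    have TI': "T I' = \<mu> * s' + \<mu> * r * s' / D' + a2 * I'" by (simp add: T_def s'_def D'_def)
    have "\<mu> * s < \<mu> * s'" using ss params by simp
    moreover have "a2 * (I' - I) = a2 * I' - a2 * I" by (simp add: algebra_simps)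
    ultimately show ?thesis unfolding TI TI' using B E G by linarith
  qed
  define \<iota> where "\<iota> I = (\<Lambda> - T I) / a1" for I
  have F2Sb0: "F2 Sb 0 = 0" using inc_FS0[OF H2] E1(1) by simp
  have F1Sb: "F1 Sb Ib = Ib * f1 Sb Ib" using F1f[of Sb Ib] E1 by auto
  have f1Sb: "f1 Sb Ib = a1" using e1(3) E1(3) unfolding F1Sb by (simp add: algebra_simps)
  have LamSb: "\<Lambda> = (r + \<mu>) * Sb + a1 * Ib" using e1(1) e1(3) F2Sb0 by linarith
  have Vb: "Vb = r * Sb / \<mu>" using e1(2) params by (simp add: field_simps)
  have dF2: "dF_dI0 F2 Sb = f2 Sb 0" using inc_dF[OF H2] E1(1) by simp
  have R2': "(dF_dI0 F2 Sb + k * Vb) / a2 > 1" using R2 unfolding a2_def[symmetric]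
    by (simp add: add_divide_distrib)
  have R2'': "dF_dI0 F2 Sb + k * Vb > a2" using R2' a2p by (simp add: less_divide_eq_1_pos)
  have hSb: "h Sb 0 > a2" using R2'' unfolding h_def dF2 Vb by simp
  have s0: "\<sigma> 0 > 0" "h (\<sigma> 0) 0 = a2" using sig[of 0] by auto
  have s0Sb: "\<sigma> 0 < Sb"
  proof (rule ccontr)
    assume "\<not> \<sigma> 0 < Sb"
    then have "h Sb 0 \<le> h (\<sigma> 0) 0" using h_mono'[of Sb "\<sigma> 0" 0] E1(1) by auto
    then show False using hSb s0 by linarith
  qed
  have T0: "T 0 = (r + \<mu>) * \<sigma> 0" using params by (simp add: T_def algebra_simps)
  have i0: "\<iota> 0 > Ib"
  proof -
    have "(r + \<mu>) * \<sigma> 0 < (r + \<mu>) * Sb" using s0Sb params by simp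
    then have "\<Lambda> - T 0 > a1 * Ib" using LamSb T0 by linarith
    then show ?thesis unfolding \<iota>_def using a1p by (simp add: less_divide_eq mult.commute)
  qed
  have Psi0: "f1 (\<sigma> 0) (\<iota> 0) < a1"
  proof -
    have "f1 (\<sigma> 0) (\<iota> 0) \<le> f1 (\<sigma> 0) Ib" using inc_anti_I[OF H1, of Ib "\<iota> 0" "\<sigma> 0"] i0 E1(3) s0 by auto
    also have "\<dots> < f1 Sb Ib" using inc_mono_S[OF H1, of "\<sigma> 0" Sb Ib] s0 s0Sb E1(3) by auto
    finally show ?thesis using f1Sb by simp
  qed
  have F1St0: "F1 St 0 = 0" using inc_FS0[OF H1] E2(1) by simp
  have F2St: "F2 St It = It * f2 St It" using F2f[of St It] E2 by auto
  have f2St: "f2 St It + k * Vt = a2"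
  proof -
    have "It * (f2 St It + k * Vt - a2) = 0" using e2(3) unfolding F2St by (simp add: algebra_simps)
    then show ?thesis using E2(3) by simp
  qed
  have DtP: "\<mu> + k * It > 0" using den[of It] E2(3) by simp
  have Vt: "Vt = r * St / (\<mu> + k * It)" using e2(2) DtP by (simp add: field_simps)
  have hSt: "h St It = a2" using f2St unfolding h_def Vt by simp
  have sIt: "\<sigma> It = St" using h_uniq[of "\<sigma> It" St It] sig[of It] E2 hSt by auto
  have TIt: "T It = \<Lambda>"
  proof -
    have "T It = \<mu> * St + \<mu> * Vt + a2 * It" unfolding T_def sIt Vt by simp
    moreover have "\<Lambda> = It * f2 St It + (r + \<mu>) * St" using e2(1) F1St0 F2St by linarith
    moreover have "r * St = (\<mu> + k * It) * Vt" using e2(2) by linarith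
    ultimately show ?thesis by (simp add: algebra_simps f2St[symmetric])
  qed
  have iIt: "\<iota> It = 0" unfolding \<iota>_def TIt by simp
  have dF1: "dF_dI0 F1 St = f1 St 0" using inc_dF[OF H1] E2(1) by simp
  have PsiIt: "f1 (\<sigma> It) (\<iota> It) > a1"
    using R1 a1p unfolding sIt iIt dF1 a1_def[symmetric] by (simp add: less_divide_eq_1_pos)
  have iota_nonneg: "\<iota> I \<ge> 0" if "0 \<le> I" "I \<le> It" for I
  proof (cases "I = It")
    case True then show ?thesis using iIt by simp
  next
    case False
    then have "T I < T It" using T_mono[of I It] that by simp
    then show ?thesis unfolding \<iota>_def TIt using a1p by simp
  qed
  have sc: "continuous_on {0..It} \<sigma>" using continuous_on_subset[OF sig_cont] by auto
  have ic: "continuous_on {0..It} \<iota>"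
    unfolding \<iota>_def T_def
    by (intro continuous_intros sc) (use a1p in \<open>auto dest!: den\<close>)
  have pc: "continuous_on {0..It} (\<lambda>I. (\<sigma> I, \<iota> I))" by (intro continuous_on_Pair sc ic)
  have img: "(\<lambda>I. (\<sigma> I, \<iota> I)) ` {0..It} \<subseteq> quadrant"
    unfolding quadrant_def using sig iota_nonneg by (auto simp: less_imp_le)
  have Pc: "continuous_on {0..It} (\<lambda>I. f1 (\<sigma> I) (\<iota> I))"
    using continuous_on_compose2[OF inc_joint[OF H1] pc img] by simp
  obtain Is where Is: "0 \<le> Is" "Is \<le> It" "f1 (\<sigma> Is) (\<iota> Is) = a1"
    using IVT'[of "\<lambda>I. f1 (\<sigma> I) (\<iota> I)" 0 a1 It, OF _ _ _ Pc] Psi0 PsiIt E2(3) by auto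
  have Is0: "Is \<noteq> 0" using Is Psi0 by auto
  have IsIt: "Is \<noteq> It" using Is PsiIt by auto
  have Ispos: "Is > 0" using Is Is0 by simp
  have iIs: "\<iota> Is > 0"
  proof -
    have "T Is < T It" using T_mono[of Is It] Is IsIt by simp
    then show ?thesis unfolding \<iota>_def TIt using a1p by simp
  qed
  define S where "S = \<sigma> Is"
  define D where "D = \<mu> + k * Is"
  define V where "V = r * S / D"
  define i1 where "i1 = \<iota> Is"
  have Sp: "S > 0" and hS: "h S Is = a2" using sig[of Is] Is by (auto simp: S_def)
  have Dp: "D > 0" using den[of Is] Is by (simp add: D_def)
  have Vp: "V > 0" using Sp Dp params by (simp add: V_def)
  have DV: "D * V = r * S" using Dp by (simp add: V_def)
  have F1e: "F1 S i1 = i1 * a1" using F1f[of S i1] Sp iIs Is(3) by (simp add: S_def i1_def)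
  have a1i1: "a1 * i1 = \<Lambda> - (\<mu> * S + \<mu> * V + a2 * Is)"
  proof -
    have "a1 * i1 = \<Lambda> - T Is" unfolding i1_def \<iota>_def using a1p by simp
    moreover have "T Is = \<mu> * S + \<mu> * V + a2 * Is" by (simp add: T_def S_def V_def D_def)
    ultimately show ?thesis by simp
  qed
  have f2S: "f2 S Is = a2 - k * V" using hS by (simp add: h_def V_def D_def)
  have F2e: "F2 S Is = a2 * Is - k * Is * V" using F2f[of S Is] Sp Is f2S by (simp add: algebra_simps)
  have eq1: "\<Lambda> - F1 S i1 - F2 S Is - (r + \<mu>) * S = D * V - r * S"
    unfolding F1e F2e using a1i1 by (simp add: D_def algebra_simps)
  show ?thesis
  proof (intro exI conjI)
    show "S > 0" "V > 0" "i1 > 0" "Is > 0" using Sp Vp iIs Ispos by (auto simp: i1_def)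
    show "is_equilibrium \<Lambda> \<mu> r k (\<gamma>1 + v1 + \<mu>) (\<gamma>2 + v2 + \<mu>) F1 F2 S V i1 Is"
      unfolding is_equilibrium_def a1_def[symmetric] a2_def[symmetric]
      using eq1 DV F1e F2e by (simp add: D_def algebra_simps)
  qed
qed
end
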